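(* For any finite simple graph $X$, the increasing extended threshold GCA map $\mathbf{F}^\uparrow$ and the decreasing extended threshold GCA map $\mathbf{F}^\downarrow$ are topologically conjugate: there is a bijection $\psi:\mathcal{S}\to\mathcal{S}$ with $\psi\circ\mathbf{F}^\uparrow=\mathbf{F}^\downarrow\circ\psi$.
   Context: Let $X$ be a finite simple graph with vertices $1,\dots,n$; $d(v)$ is the degree of $v$ and $n[v]$ the closed neighborhood of $v$. An extended vertex state is $s_v=(x_v,k_v)\in\{0,1\}\times\{1,\dots,d(v)+1\}$; $\mathcal{S}=\prod_v(\{0,1\}\times\{1,\dots,d(v)+1\})$. Let $\sigma(x[v])=|\{u\in n[v]:x_u=1\}|$. Both vertex functions set $x_v'=1$ iff $\sigma(x[v])\ge k_v$ (else $0$). Increasing: $k_v'=k_v+1$ if $x_v=0$ and $\sigma(x[v])\ge k_v$, else $k_v'=k_v$. Decreasing: $k_v'=k_v-1$ if $x_v=1$ and $\sigma(x[v])<k_v$, else $k_v'=k_v$. The GCA maps $\mathbf{F}^\uparrow,\mathbf{F}^\downarrow:\mathcal{S}\to\mathcal{S}$ apply the respective vertex function at all vertices simultaneously (each using the current state). *)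

theory Defs
  imports Main
begin

definition simple_graph :: "'a set \<Rightarrow> ('a \<Rightarrow> 'a \<Rightarrow> bool) \<Rightarrow> bool" where
  "simple_graph V E \<longleftrightarrow> finite V \<and> (\<forall>u v. E u v \<longrightarrow> u \<in> V \<and> v \<in> V)
     \<and> (\<forall>u v. E u v \<longrightarrow> E v u) \<and> (\<forall>v. \<not> E v v)"

definition deg :: "'a set \<Rightarrow> ('a \<Rightarrow> 'a \<Rightarrow> bool) \<Rightarrow> 'a \<Rightarrow> nat" where
  "deg V E v = card {u \<in> V. E v u}"

definition closed_nbhd :: "'a set \<Rightarrow> ('a \<Rightarrow> 'a \<Rightarrow> bool) \<Rightarrow> 'a \<Rightarrow> 'a set" where
  "closed_nbhd V E v = {u \<in> V. u = v \<or> E v u}"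

text \<open>An extended state assigns to each vertex a pair (x_v, k_v); x_v is encoded as a
  natural number in {0,1}. Outside V the state is fixed to the dummy value (0,1),
  so that the state space is in bijection with the product over V.\<close>
type_synonym 'a ext_state = "'a \<Rightarrow> nat \<times> nat"

definition state_space :: "'a set \<Rightarrow> ('a \<Rightarrow> 'a \<Rightarrow> bool) \<Rightarrow> 'a ext_state set" where
  "state_space V E = {s. (\<forall>v \<in> V. fst (s v) \<in> {0,1} \<and> snd (s v) \<in> {1..deg V E v + 1})
                         \<and> (\<forall>v. v \<notin> V \<longrightarrow> s v = (0,1))}"

definition sigma :: "'a set \<Rightarrow> ('a \<Rightarrow> 'a \<Rightarrow> bool) \<Rightarrow> 'a ext_state \<Rightarrow> 'a \<Rightarrow> nat" where
  "sigma V E s v = card {u \<in> closed_nbhd V E v. fst (s u) = 1}"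

definition F_up :: "'a set \<Rightarrow> ('a \<Rightarrow> 'a \<Rightarrow> bool) \<Rightarrow> 'a ext_state \<Rightarrow> 'a ext_state" where
  "F_up V E s = (\<lambda>v. if v \<in> V then
      (let x = fst (s v); k = snd (s v); sg = sigma V E s v in
        (if sg \<ge> k then 1 else 0,
         if x = 0 \<and> sg \<ge> k then k + 1 else k))
     else s v)"

definition F_down :: "'a set \<Rightarrow> ('a \<Rightarrow> 'a \<Rightarrow> bool) \<Rightarrow> 'a ext_state \<Rightarrow> 'a ext_state" where
  "F_down V E s = (\<lambda>v. if v \<in> V then
      (let x = fst (s v); k = snd (s v); sg = sigma V E s v in
        (if sg \<ge> k then 1 else 0,
         if x = 1 \<and> sg < k then k - 1 else k))
     else s v)"

end

theory Submission
  imports Defs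
begin

definition psi :: "'a set \<Rightarrow> ('a \<Rightarrow> 'a \<Rightarrow> bool) \<Rightarrow> 'a ext_state \<Rightarrow> 'a ext_state" where
  "psi V E s = (\<lambda>v. if v \<in> V then (1 - fst (s v), deg V E v + 2 - snd (s v)) else s v)"

lemma nbhd_card:
  assumes "simple_graph V E" "v \<in> V"
  shows "card (closed_nbhd V E v) = deg V E v + 1" "finite (closed_nbhd V E v)"
    "closed_nbhd V E v \<subseteq> V"
proof -
  have fin: "finite V" using assms(1) by (simp add: simple_graph_def)
  have eq: "closed_nbhd V E v = insert v {u \<in> V. E v u}"
    using assms by (auto simp: closed_nbhd_def)
  have "v \<notin> {u \<in> V. E v u}" using assms(1) by (simp add: simple_graph_def)
  then show "card (closed_nbhd V E v) = deg V E v + 1"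
    using fin by (simp add: eq deg_def)
  show "finite (closed_nbhd V E v)" using fin by (simp add: closed_nbhd_def)
  show "closed_nbhd V E v \<subseteq> V" by (auto simp: closed_nbhd_def)
qed

lemma sigma_le:
  assumes "simple_graph V E" "v \<in> V"
  shows "sigma V E s v \<le> deg V E v + 1"
proof -
  have "sigma V E s v \<le> card (closed_nbhd V E v)"
    unfolding sigma_def by (rule card_mono) (use nbhd_card[OF assms] in auto)
  then show ?thesis using nbhd_card[OF assms] by simp
qed

lemma sigma_psi:
  assumes "simple_graph V E" "v \<in> V" "s \<in> state_space V E"
  shows "sigma V E (psi V E s) v = deg V E v + 1 - sigma V E s v"
proof -
  let ?N = "closed_nbhd V E v"
  note nb = nbhd_card[OF assms(1,2)]
  have "{u \<in> ?N. fst (psi V E s u) = 1} = ?N - {u \<in> ?N. fst (s u) = 1}"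
  proof -
    have "\<And>u. u \<in> ?N \<Longrightarrow> (fst (psi V E s u) = 1) = (fst (s u) \<noteq> 1)"
    proof -
      fix u assume "u \<in> ?N"
      then have "u \<in> V" using nb by auto
      then have "fst (s u) \<in> {0,1}" using assms(3) by (simp add: state_space_def)
      then show "(fst (psi V E s u) = 1) = (fst (s u) \<noteq> 1)"
        using \<open>u \<in> V\<close> by (auto simp: psi_def)
    qed
    then show ?thesis by auto
  qed
  then have "sigma V E (psi V E s) v = card ?N - sigma V E s v"
    unfolding sigma_def by (simp add: card_Diff_subset nb)
  then show ?thesis using nb by simp
qed

lemma psi_in:
  assumes "s \<in> state_space V E"
  shows "psi V E s \<in> state_space V E"
  using assms by (auto simp: state_space_def psi_def)

lemma psi_psi:
  assumes "s \<in> state_space V E"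
  shows "psi V E (psi V E s) = s"
proof
  fix v show "psi V E (psi V E s) v = s v"
  proof (cases "v \<in> V")
    case True
    then have "fst (s v) \<in> {0,1}" "snd (s v) \<in> {1..deg V E v + 1}"
      using assms by (auto simp: state_space_def)
    then show ?thesis using True by (auto simp: psi_def prod_eq_iff)
  qed (simp add: psi_def)
qed

theorem corollary3p5:
  fixes V :: "'a set" and E :: "'a \<Rightarrow> 'a \<Rightarrow> bool"
  assumes "simple_graph V E"
  shows "\<exists>\<psi>. bij_betw \<psi> (state_space V E) (state_space V E) \<and>
             (\<forall>s \<in> state_space V E. \<psi> (F_up V E s) = F_down V E (\<psi> s))"
proof (intro exI[of _ "psi V E"] conjI ballI)
  show "bij_betw (psi V E) (state_space V E) (state_space V E)"
    by (rule bij_betw_byWitness[where f'="psi V E"]) (auto simp: psi_psi psi_in)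
next
  fix s assume s: "s \<in> state_space V E"
  show "psi V E (F_up V E s) = F_down V E (psi V E s)"
  proof
    fix v show "psi V E (F_up V E s) v = F_down V E (psi V E s) v"
    proof (cases "v \<in> V")
      case True
      have x: "fst (s v) \<in> {0,1}" and k: "snd (s v) \<in> {1..deg V E v + 1}"
        using s True by (auto simp: state_space_def)
      have sg: "sigma V E s v \<le> deg V E v + 1" by (rule sigma_le[OF assms True])
      have sp: "sigma V E (psi V E s) v = deg V E v + 1 - sigma V E s v"
        by (rule sigma_psi[OF assms True s])
      have fd: "F_down V E (psi V E s) v = (if sigma V E (psi V E s) v \<ge> snd (psi V E s v) then 1 else 0,
         if fst (psi V E s v) = 1 \<and> sigma V E (psi V E s) v < snd (psi V E s v)
         then snd (psi V E s v) - 1 else snd (psi V E s v))"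
        using True by (simp add: F_down_def Let_def)
      show ?thesis unfolding fd sp using True x k sg
        by (auto simp: psi_def F_up_def Let_def)
    qed (simp add: psi_def F_up_def F_down_def)
  qed
qed

end
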